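(* Let $q=p^m$ with $p$ an odd prime and $m\ge1$, and for $b\in\mathbb{F}_{q^2}$ let $\delta(b)=\#\{u\in\mathbb{F}_{q^2}:\ 2u^{q+1}+u^2=b\}$. Then $\delta(0)=q$ if $p=3$, and $\delta(0)=1$ otherwise.
   Context: $\delta(b)$ equals $\delta_f(1,b+\tfrac14)$ for $f(x)=x^{q+2}$, where $\delta_f(a,b)=\#\{x\in\mathbb{F}_{q^2}: f(x+a)-f(x)=b\}$. *)

theory Defs
  imports "HOL-Computational_Algebra.Primes"
begin

text \<open>The finite field F_{q^2} is modelled by a finite field type 'a with CARD('a) = q^2.
  delta q b = number of u in F_{q^2} with 2 u^(q+1) + u^2 = b.\<close>

definition delta :: "nat \<Rightarrow> 'a::{field,finite} \<Rightarrow> nat" where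
  "delta q b = card {u::'a. 2 * u ^ (q + 1) + u ^ 2 = b}"

end

theory Submission imports Defs "HOL-Number_Theory.Residues" "HOL-Computational_Algebra.Polynomial" begin

lemma card_pow_eq_le:
  fixes c :: "'a::field"
  assumes "n > 0"
  shows "card {x. x ^ n = c} \<le> n"
proof -
  let ?P = "monom 1 n - [:c:]"
  have c: "coeff ?P n = 1" using assms by (simp add: coeff_pCons split: nat.splits)
  hence nz: "?P \<noteq> 0" by (metis coeff_0 zero_neq_one)
  have "{x. x ^ n = c} = {x. poly ?P x = 0}" by (auto simp: poly_monom)
  also have "card \<dots> \<le> degree ?P" by (rule card_poly_roots_bound[OF nz])
  also have "degree ?P \<le> n"
    using degree_diff_le_max[of "monom 1 n" "[:c:]"] by (simp add: degree_monom_eq)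
  finally show ?thesis .
qed

lemma power_card_minus1:
  fixes x :: "'a::{field,finite}"
  assumes "x \<noteq> 0"
  shows "x ^ (card (UNIV :: 'a set) - 1) = 1"
proof -
  have "(\<Prod>y\<in>UNIV-{0}. x * y) = x ^ (card (UNIV :: 'a set) - 1) * \<Prod>(UNIV-{0::'a})"
    by (simp add: prod.distrib mult_ac card_Diff_singleton)
  also have "(\<Prod>y\<in>UNIV-{0}. x * y) = (\<Prod>y\<in>UNIV-{0::'a}. y)"
    by (rule prod.reindex_bij_witness[of _ "\<lambda>y. y / x" "\<lambda>y. x * y"]) (use assms in auto)
  finally show ?thesis by simp
qed

lemma char_is:
  assumes "prime p" "card (UNIV :: 'a::{field,finite} set) = p ^ k"
  shows "CHAR('a) = p"
proof -
  have pos: "CHAR('a) > 0" by (rule finite_imp_CHAR_pos) simp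
  have pr: "prime CHAR('a)" by (rule prime_CHAR_semidom[OF pos])
  have "CHAR('a) dvd p ^ k" using CHAR_dvd_CARD[where 'a='a] assms by simp
  hence "CHAR('a) dvd p" using pr prime_dvd_power by blast
  thus ?thesis using pr assms(1) primes_dvd_imp_eq by blast
qed

theorem proposition3:
  fixes p m q :: nat
  assumes "prime p" and "odd p" and "m \<ge> 1" and "q = p ^ m"
    and "card (UNIV :: 'a::{field,finite} set) = q ^ 2"
  shows "delta q (0::'a) = (if p = 3 then q else 1)"
proof -
  have ch: "CHAR('a) = p" using char_is[OF assms(1), where k="m*2"] assms(4,5)
    by (simp add: power_mult)
  have ofn: "of_nat n = (0::'a) \<longleftrightarrow> p dvd n" for n
    using of_nat_eq_0_iff_char_dvd ch by metis
  have p3: "p \<ge> 3" using prime_ge_2_nat[OF assms(1)] assms(2) by (cases "p = 2") auto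
  have "p \<le> p ^ m" using assms(3) p3 by (intro self_le_power) auto
  hence qge: "q \<ge> 3" using p3 assms(4) by simp
  have qs: "q + 1 = 2 + (q - 1)" using qge by simp
  have oddq: "odd q" using assms(2,4) by simp
  have fr: "(x + y :: 'a) ^ q = x ^ q + y ^ q" for x y
    using freshmans_dream'[of q m x y] ch assms(1,4) by simp
  have two: "(2::'a) ^ q = 2"
    using fr[of 1 1] by simp
  have pc: "(x::'a) \<noteq> 0 \<Longrightarrow> x ^ (q^2 - 1) = 1" for x
    using power_card_minus1[of x] assms(5) by simp
  have qq: "q^2 - 1 = (q-1)*(q+1)" using qge
    by (simp add: power2_eq_square algebra_simps)
  show ?thesis
  proof (cases "p = 3")
    case False
    have "{u::'a. 2 * u ^ (q + 1) + u ^ 2 = 0} = {0}"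
    proof (rule ccontr)
      assume "{u::'a. 2 * u ^ (q + 1) + u ^ 2 = 0} \<noteq> {0}"
      moreover have "0 \<in> {u::'a. 2 * u ^ (q + 1) + u ^ 2 = 0}" by simp
      ultimately obtain u :: 'a where u: "u \<noteq> 0" "2 * u ^ (q + 1) + u ^ 2 = 0" by blast
      have h: "u ^ (q+1) = u^2 * u^(q-1)" using qge
        by (simp only: qs power_add)
      have "u^2 * (2 * u^(q-1) + 1) = 2 * (u^2 * u^(q-1)) + u^2" by (simp add: ring_distribs mult_ac)
      also have "\<dots> = 0" using u(2) by (simp only: h)
      finally have "u^2 * (2 * u^(q-1) + 1) = 0" .
      with u have e: "2 * u^(q-1) = -1" by (simp add: add_eq_0_iff2)
      hence "(2 * u^(q-1))^(q+1) = (-1::'a)^(q+1)" by simp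
      moreover have "(2 * u^(q-1))^(q+1) = 2^(q+1) * u^(q^2-1)"
        by (simp only: power_mult_distrib qq power_mult)
      moreover have "(-1::'a)^(q+1) = 1" using oddq by simp
      ultimately have "2^(q+1) * u^(q^2-1) = (1::'a)" by simp
      hence "(4::'a) = 1" using pc[OF u(1)] two by simp
      moreover have "(3::'a) + 1 = 4" by (simp only: numeral_plus_one) simp
      ultimately have "(3::'a) + 1 = 0 + 1" by (simp only: add_0)
      hence "(3::'a) = 0" by (rule add_right_imp_eq)
      hence "of_nat 3 = (0::'a)" by (simp only: of_nat_numeral)
      hence "p dvd 3" using ofn by blast
      hence "p = 1 \<or> p = 3" using prime_nat_iff[of 3] by auto
      thus False using False assms(1) by auto
    qed
    thus ?thesis using False by (simp add: delta_def)
  next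
    case True
    have "(3::'a) = 0" using ofn[of 3] True by simp
    hence m1: "(2::'a) = -1" by (simp add: eq_neg_iff_add_eq_0)
    define S where "S = {u::'a. u^(q-1) = 1}"
    have h: "u ^ (q+1) = u^2 * u^(q-1)" for u :: 'a using qge
      by (simp only: qs power_add)
    have h2: "2 * u ^ (q + 1) + u ^ 2 = u^2 * (1 - u^(q-1))" for u :: 'a
      by (simp only: h m1) (simp add: ring_distribs mult_ac)
    have "{u::'a. 2 * u ^ (q + 1) + u ^ 2 = 0} = insert 0 S"
      by (auto simp only: h2 S_def mem_Collect_eq insert_iff mult_eq_0_iff power_eq_0_iff right_minus_eq)
    moreover have "0 \<notin> S" using qge by (simp add: S_def power_0_left)
    moreover have cS: "card S = q - 1"
    proof (rule antisym)
      show "card S \<le> q - 1" unfolding S_def by (rule card_pow_eq_le) (use qge in simp)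
      have sub: "UNIV - {0::'a} \<subseteq> (\<Union>c\<in>S. {x. x^(q+1) = c})"
      proof
        fix x :: 'a assume "x \<in> UNIV - {0}"
        hence x0: "x \<noteq> 0" by simp
        have "(x^(q+1))^(q-1) = x^(q^2-1)" by (simp only: qq power_mult[symmetric] mult.commute)
        hence "(x^(q+1))^(q-1) = 1" using pc[OF x0] by simp
        thus "x \<in> (\<Union>c\<in>S. {x. x^(q+1) = c})" by (auto simp: S_def)
      qed
      have "q^2 - 1 = card (UNIV - {0::'a})" using assms(5) by (simp add: card_Diff_singleton)
      also have "\<dots> \<le> card (\<Union>c\<in>S. {x::'a. x^(q+1) = c})" by (rule card_mono[OF _ sub]) simp
      also have "\<dots> \<le> (\<Sum>c\<in>S. card {x::'a. x^(q+1) = c})" by (rule card_UN_le) simp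
      also have "\<dots> \<le> (\<Sum>c\<in>S. q + 1)" by (rule sum_mono) (rule card_pow_eq_le, simp)
      also have "\<dots> = card S * (q+1)" by simp
      finally have "(q-1)*(q+1) \<le> card S * (q+1)" using qq by simp
      thus "q - 1 \<le> card S" using mult_le_cancel2[of "q-1" "q+1" "card S"] by simp
    qed
    ultimately show ?thesis using True qge by (simp add: delta_def)
  qed
qed

end
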